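(* If $r\ge1$ and $n_1,\ldots,n_r\ge0$ are integers with $n_1>0$ (i.e. $-n_1<0$), then \[ \zeta(-n_1,\ldots,-n_r|1)=\zeta(-n_1,\ldots,-n_r|0). \]
   Context: Normalized multiple Bernoulli polynomials: for integers $k\ge0$, $\zeta(-k|z)=-\frac{B_{k+1}(z)}{k+1}$ ($B_n(z)$ the Bernoulli polynomials, $B_n=B_n(0)$), and for $r\ge2$, $k_j\ge0$, $\zeta(-k_1,\ldots,-k_r|z)=-\frac{1}{k_r+1}\zeta(-k_1,\ldots,-k_{r-2},-k_{r-1}-k_r-1|z)-\frac12\zeta(-k_1,\ldots,-k_{r-2},-k_{r-1}-k_r|z)+\sum_{q=1}^{k_r}(-k_r)_q\frac{B_{q+1}}{(q+1)!}\zeta(-k_1,\ldots,-k_{r-2},-k_{r-1}-k_r+q|z)$, with $(a)_q=a(a+1)\cdots(a+q-1)$ (for $r=2$ the prefix is empty). *)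

theory Defs
  imports Complex_Main
begin

text \<open>Bernoulli numbers with B_1 = -1/2 (so that B_n = B_n(0)):
  B_0 = 1 and sum_{k=0}^{n} binom(n+1,k) B_k = 0 for n >= 1.\<close>
function bernoulli :: "nat \<Rightarrow> real" where
  "bernoulli n = (if n = 0 then 1
     else - (\<Sum>k<n. real ((n + 1) choose k) * bernoulli k) / real (n + 1))"
  by auto
termination by (relation "measure id") auto

definition bernpoly :: "nat \<Rightarrow> real \<Rightarrow> real" where
  "bernpoly n z = (\<Sum>k\<le>n. real (n choose k) * bernoulli k * z ^ (n - k))"

text \<open>Auxiliary: the multiple Bernoulli polynomial indexed by the REVERSED list
  [k_r, k_(r-1), ..., k_1] (list entries k_j correspond to arguments -k_j).\<close>
fun zeta_rev :: "nat list \<Rightarrow> real \<Rightarrow> real" where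
  "zeta_rev [] z = 0"
| "zeta_rev [k] z = - bernpoly (k + 1) z / real (k + 1)"
| "zeta_rev (kr # kr1 # rest) z =
     - (1 / real (kr + 1)) * zeta_rev ((kr1 + kr + 1) # rest) z
     - (1 / 2) * zeta_rev ((kr1 + kr) # rest) z
     + (\<Sum>q=1..kr. pochhammer (- real kr) q * bernoulli (q + 1) / fact (q + 1)
          * zeta_rev ((kr1 + kr - q) # rest) z)"

text \<open>mzeta [k_1,...,k_r] z = zeta(-k_1,...,-k_r | z).\<close>
definition mzeta :: "nat list \<Rightarrow> real \<Rightarrow> real" where
  "mzeta ks z = zeta_rev (rev ks) z"

end

theory Submission
  imports Defs
begin

lemma bern_sum: assumes "n \<ge> 2" shows "(\<Sum>k<n. real (n choose k) * bernoulli k) = 0"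
proof -
  obtain m where m: "n = Suc m" "m \<ge> 1" using assms by (cases n) auto
  have b: "bernoulli m = - (\<Sum>k<m. real ((m + 1) choose k) * bernoulli k) / real (m + 1)"
    using m by (subst bernoulli.simps) simp
  have "(\<Sum>k<n. real (n choose k) * bernoulli k)
     = (\<Sum>k<m. real ((m+1) choose k) * bernoulli k) + real (m+1) * bernoulli m"
    using m by simp
  also have "\<dots> = 0" using b by (simp add: field_simps)
  finally show ?thesis .
qed

lemma bernpoly_1_0: assumes "n \<ge> 2" shows "bernpoly n 1 = bernpoly n 0"
proof -
  have "bernpoly n 1 = (\<Sum>k<n. real (n choose k) * bernoulli k) + bernoulli n"
    unfolding bernpoly_def by (simp add: lessThan_Suc_atMost[symmetric])
  moreover have "bernpoly n 0 = bernoulli n"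
    unfolding bernpoly_def
    by (simp add: lessThan_Suc_atMost[symmetric] power_0_left)
  ultimately show ?thesis using bern_sum[OF assms] by simp
qed

lemma zr: "xs \<noteq> [] \<Longrightarrow> last xs > 0 \<Longrightarrow> zeta_rev xs 1 = zeta_rev xs 0"
proof (induction xs "1::real" rule: zeta_rev.induct)
  case 1 then show ?case by simp
next
  case (2 k) then show ?case using bernpoly_1_0[of "k+1"] by simp
next
  case (3 kr kr1 rest)
  have L: "\<And>a. a \<ge> kr1 \<Longrightarrow> last (a # rest) > 0"
    using "3" by (cases rest) auto
  have e1: "zeta_rev ((kr1 + kr + 1) # rest) 1 = zeta_rev ((kr1 + kr + 1) # rest) 0"
    by (rule "3"(1)) (simp, rule L, simp)
  have e2: "zeta_rev ((kr1 + kr) # rest) 1 = zeta_rev ((kr1 + kr) # rest) 0"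
    by (rule "3"(2)) (simp, rule L, simp)
  have e3: "\<And>q. q \<in> {1..kr} \<Longrightarrow> zeta_rev ((kr1 + kr - q) # rest) 1 = zeta_rev ((kr1 + kr - q) # rest) 0"
    by (rule "3"(3)) (assumption, simp, rule L, auto)
  have e4: "(\<Sum>q=1..kr. pochhammer (- real kr) q * bernoulli (q + 1) / fact (q + 1)
          * zeta_rev ((kr1 + kr - q) # rest) 1) = (\<Sum>q=1..kr. pochhammer (- real kr) q * bernoulli (q + 1) / fact (q + 1)
          * zeta_rev ((kr1 + kr - q) # rest) 0)"
    by (rule sum.cong) (simp_all only: e3)
  show ?case by (simp only: zeta_rev.simps e1 e2 e4)
qed

theorem mainTheorem10:
  fixes ns :: "nat list"
  assumes "length ns \<ge> 1" and "hd ns > 0"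
  shows "mzeta ns 1 = mzeta ns 0"
  unfolding mzeta_def using assms
  by (intro zr) (auto simp: last_rev)

end
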